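(* Let $k\ge2$, $n\ge1$ be integers and let $K_1,\dots,K_k$ be unconditional convex bodies in $\mathbb{R}^n$ with nonempty interior and radial functions $r_i=r_{K_i}$. Assume that for all $x_1,\dots,x_k\in S^{n-1}$, writing $x_i=((x_i)_1,\dots,(x_i)_n)$, $$\prod_{i=1}^kr_i(x_i)\le\frac{1}{\Bigl(\sum_{j=1}^n\bigl(|(x_1)_j|^{1/k}\cdots|(x_k)_j|^{1/k}\bigr)^2\Bigr)^{k/2}} .$$ Then $\prod_{i=1}^k\mathrm{vol}_n(K_i)\le(\mathrm{vol}_n(B_2^n))^k$.
   Context: $K$ is unconditional if it is invariant under all coordinate sign changes. The radial function of $K$ is $r_K(x)=\max\{\lambda\ge0:\lambda x\in K\}$. $S^{n-1}$ is the Euclidean unit sphere, $B_2^n$ the Euclidean unit ball, $\mathrm{vol}_n$ Lebesgue measure. The right-hand side is interpreted as $+\infty$ when its denominator vanishes. *)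

theory Defs
  imports "HOL-Analysis.Analysis"
begin

definition convex_body :: "('a::euclidean_space) set \<Rightarrow> bool" where
  "convex_body K \<longleftrightarrow> compact K \<and> convex K"

definition unconditional :: "(real ^ 'n) set \<Rightarrow> bool" where
  "unconditional K \<longleftrightarrow>
     (\<forall>\<epsilon> :: 'n \<Rightarrow> real. (\<forall>j. \<epsilon> j = 1 \<or> \<epsilon> j = -1) \<longrightarrow>
        (\<forall>x\<in>K. (\<chi> j. \<epsilon> j * x $ j) \<in> K))"

definition radial_fun :: "('a::real_vector) set \<Rightarrow> 'a \<Rightarrow> real" where
  "radial_fun K x = Sup {t::real. t \<ge> 0 \<and> t *\<^sub>R x \<in> K}"

end

theory Submission
  imports Defs
begin

lemma emeasure_affine_image:
  fixes A :: "real set" and c t :: real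
  assumes A: "A \<in> sets borel" and c: "c > 0"
  shows "emeasure lborel ((\<lambda>x. t + c*x) ` A) = ennreal c * emeasure lborel A"
proof -
  have img: "(\<lambda>x. t + c*x) ` A = (\<lambda>y. (y - t)/c) -` A"
    using c by (force simp: field_simps image_iff)
  have S: "(\<lambda>x. t + c*x) ` A \<in> sets borel" unfolding img
    by (rule measurable_sets_borel[OF _ A]) measurable
  have ind: "indicator ((\<lambda>x. t + c*x) ` A) (t + c * x) = (indicator A x :: ennreal)" for x
    using c by (auto simp: img split: split_indicator)
  have "emeasure lborel ((\<lambda>x. t + c*x) ` A) = (\<integral>\<^sup>+x. indicator ((\<lambda>x. t + c*x) ` A) x \<partial>lborel)"
    using S by simp
  also have "\<dots> = ennreal \<bar>c\<bar> * (\<integral>\<^sup>+x. indicator ((\<lambda>x. t + c*x) ` A) (t + c * x) \<partial>lborel)"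
    by (rule nn_integral_real_affine) (use S c in auto)
  also have "\<dots> = ennreal c * emeasure lborel A"
    using c A by (simp add: ind)
  finally show ?thesis .
qed

lemma BM2:
  fixes A B :: "real set" and l :: real
  assumes A: "compact A" "A \<noteq> {}" and B: "compact B" "B \<noteq> {}" and l: "0 < l" "l < 1"
  shows "ennreal l * emeasure lborel A + ennreal (1-l) * emeasure lborel B
           \<le> emeasure lborel {l*a + (1-l)*b | a b. a \<in> A \<and> b \<in> B}"
proof -
  define C where "C = {l*a + (1-l)*b | a b. a \<in> A \<and> b \<in> B}"
  have C_eq: "C = (\<lambda>(a,b). l*a + (1-l)*b) ` (A \<times> B)" unfolding C_def by auto
  have "compact C" unfolding C_eq
    by (intro compact_continuous_image compact_Times A B continuous_intros) (auto simp: case_prod_unfold intro!: continuous_intros)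
  then have Cm: "C \<in> sets borel" by (simp add: borel_compact)
  obtain \<alpha> where \<alpha>: "\<alpha> \<in> A" "\<And>y. y \<in> A \<Longrightarrow> y \<le> \<alpha>" using compact_attains_sup[OF A] by blast
  obtain \<beta> where \<beta>: "\<beta> \<in> B" "\<And>y. y \<in> B \<Longrightarrow> \<beta> \<le> y" using compact_attains_inf[OF B] by blast
  define p where "p = l*\<alpha> + (1-l)*\<beta>"
  define S1 where "S1 = (\<lambda>x. (1-l)*\<beta> + l*x) ` A"
  define S2 where "S2 = (\<lambda>x. l*\<alpha> + (1-l)*x) ` B"
  have Am: "A \<in> sets borel" "B \<in> sets borel" using A B by (auto simp: borel_compact)
  have m1: "emeasure lborel S1 = ennreal l * emeasure lborel A"
    unfolding S1_def by (rule emeasure_affine_image) (use Am l in auto)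
  have m2: "emeasure lborel S2 = ennreal (1-l) * emeasure lborel B"
    unfolding S2_def by (rule emeasure_affine_image) (use Am l in auto)
  have S1m: "S1 \<in> sets borel" unfolding S1_def
    by (intro borel_compact compact_continuous_image A continuous_intros)
  have S2m: "S2 \<in> sets borel" unfolding S2_def
    by (intro borel_compact compact_continuous_image B continuous_intros)
  have S1C: "S1 \<subseteq> C" unfolding S1_def C_def using \<beta> by (force simp: algebra_simps)
  have S2C: "S2 \<subseteq> C" unfolding S2_def C_def using \<alpha> by (force simp: algebra_simps)
  have S1p: "S1 \<subseteq> {..p}" unfolding S1_def p_def using \<alpha> l
    by (auto intro!: mult_left_mono)
  have S2p: "S2 \<subseteq> {p..}" unfolding S2_def p_def using \<beta> l
    by (auto intro!: mult_left_mono)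
  have "emeasure lborel S2 \<le> emeasure lborel (S2 \<inter> {p<..} \<union> {p})"
    by (rule emeasure_mono) (use S2p S2m in auto)
  also have "\<dots> \<le> emeasure lborel (S2 \<inter> {p<..}) + emeasure lborel {p}"
    by (rule emeasure_subadditive) (use S2m in auto)
  also have "\<dots> = emeasure lborel (S2 \<inter> {p<..})" by simp
  finally have e2: "emeasure lborel S2 \<le> emeasure lborel (S2 \<inter> {p<..})" .
  have "emeasure lborel S1 + emeasure lborel (S2 \<inter> {p<..}) = emeasure lborel (S1 \<union> (S2 \<inter> {p<..}))"
    by (rule plus_emeasure) (use S1m S2m S1p in auto)
  also have "\<dots> \<le> emeasure lborel C"
    by (rule emeasure_mono) (use S1C S2C Cm in auto)
  finally have "emeasure lborel S1 + emeasure lborel S2 \<le> emeasure lborel C"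
    using e2 by (meson add_left_mono order_trans)
  then show ?thesis using m1 m2 unfolding C_def by simp
qed

lemma MS_Suc:
  fixes A :: "nat \<Rightarrow> real set" assumes k: "k \<ge> 1"
  shows "{(\<Sum>i<Suc k. s i)/real (Suc k) | s. \<forall>i<Suc k. s i \<in> A i}
       = {(real k / real (Suc k))*m + (1 - real k / real (Suc k))*a | m a.
            m \<in> {(\<Sum>i<k. s i)/real k | s. \<forall>i<k. s i \<in> A i} \<and> a \<in> A k}"
proof -
  have key: "(\<Sum>i<Suc k. s i)/real (Suc k) = (real k / real (Suc k))*((\<Sum>i<k. s i)/real k) + (1 - real k / real (Suc k))* s k" for s :: "nat \<Rightarrow> real"
  proof -
    have "real k \<noteq> 0" using k by simp
    then show ?thesis by (simp add: divide_simps)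
  qed
  show ?thesis
  proof (intro equalityI subsetI)
    fix x assume "x \<in> {(\<Sum>i<Suc k. s i)/real (Suc k) | s. \<forall>i<Suc k. s i \<in> A i}"
    then obtain s where s: "x = (\<Sum>i<Suc k. s i)/real (Suc k)" "\<forall>i<Suc k. s i \<in> A i" by blast
    show "x \<in> {(real k / real (Suc k))*m + (1 - real k / real (Suc k))*a | m a.
            m \<in> {(\<Sum>i<k. s i)/real k | s. \<forall>i<k. s i \<in> A i} \<and> a \<in> A k}"
      using s key[of s] by force
  next
    fix x assume "x \<in> {(real k / real (Suc k))*m + (1 - real k / real (Suc k))*a | m a.
            m \<in> {(\<Sum>i<k. s i)/real k | s. \<forall>i<k. s i \<in> A i} \<and> a \<in> A k}"
    then obtain s a where s: "x = (real k / real (Suc k))*((\<Sum>i<k. s i)/real k) + (1 - real k / real (Suc k))*a"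
      "\<forall>i<k. s i \<in> A i" "a \<in> A k" by blast
    define s' where "s' = s(k := a)"
    have "(\<Sum>i<k. s' i) = (\<Sum>i<k. s i)" unfolding s'_def by (intro sum.cong) auto
    moreover have "s' k = a" unfolding s'_def by simp
    ultimately have "x = (\<Sum>i<Suc k. s' i)/real (Suc k)" using s(1) key[of s'] by simp
    moreover have "\<forall>i<Suc k. s' i \<in> A i" using s unfolding s'_def by (auto simp: less_Suc_eq)
    ultimately show "x \<in> {(\<Sum>i<Suc k. s i)/real (Suc k) | s. \<forall>i<Suc k. s i \<in> A i}" by blast
  qed
qed

lemma BMk:
  fixes A :: "nat \<Rightarrow> real set"
  assumes k: "k \<ge> 1" and A: "\<And>i. i < k \<Longrightarrow> compact (A i) \<and> A i \<noteq> {}"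
  shows "compact {(\<Sum>i<k. s i)/real k | s. \<forall>i<k. s i \<in> A i} \<and>
         (\<Sum>i<k. emeasure lborel (A i)) \<le> of_nat k * emeasure lborel {(\<Sum>i<k. s i)/real k | s. \<forall>i<k. s i \<in> A i}"
  using k A
proof (induction k rule: nat_induct_at_least)
  case base
  have "{(\<Sum>i<1. s i)/real 1 | s. \<forall>i<1. s i \<in> A i} = A 0"
  proof (intro equalityI subsetI)
    fix x assume "x \<in> A 0" then show "x \<in> {(\<Sum>i<1. s i)/real 1 | s. \<forall>i<1. s i \<in> A i}"
      by (intro CollectI exI[of _ "\<lambda>_. x"]) auto
  qed auto
  then show ?case using base by simp
next
  case (Suc k)
  define l where "l = real k / real (Suc k)"
  let ?M = "{(\<Sum>i<k. s i)/real k | s. \<forall>i<k. s i \<in> A i}"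
  have IH: "compact ?M" "(\<Sum>i<k. emeasure lborel (A i)) \<le> of_nat k * emeasure lborel ?M"
    using Suc by auto
  have Mne: "?M \<noteq> {}"
  proof -
    have "\<forall>i<k. \<exists>x. x \<in> A i" using Suc.prems by (meson all_not_in_conv less_SucI)
    then obtain s where "\<forall>i<k. s i \<in> A i" by metis
    then show ?thesis by blast
  qed
  have Ak: "compact (A k)" "A k \<noteq> {}" using Suc.prems by auto
  have l: "0 < l" "l < 1" using Suc.hyps by (auto simp: l_def)
  have eq: "{(\<Sum>i<Suc k. s i)/real (Suc k) | s. \<forall>i<Suc k. s i \<in> A i}
       = {l*m + (1 - l)*a | m a. m \<in> ?M \<and> a \<in> A k}"
    unfolding l_def by (rule MS_Suc) (use Suc.hyps in auto)
  have cpt: "compact {l*m + (1 - l)*a | m a. m \<in> ?M \<and> a \<in> A k}"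
  proof -
    have "{l*m + (1 - l)*a | m a. m \<in> ?M \<and> a \<in> A k} = (\<lambda>(m,a). l*m + (1-l)*a) ` (?M \<times> A k)"
      by auto
    then show ?thesis using IH(1) Ak
      by (auto intro!: compact_continuous_image compact_Times continuous_intros simp: case_prod_unfold)
  qed
  have bm: "ennreal l * emeasure lborel ?M + ennreal (1-l) * emeasure lborel (A k)
           \<le> emeasure lborel {l*m + (1-l)*a | m a. m \<in> ?M \<and> a \<in> A k}"
    by (rule BM2) (use IH Mne Ak l in auto)
  have c1: "of_nat (Suc k) * ennreal l = (of_nat k :: ennreal)"
  proof -
    have "of_nat (Suc k) * ennreal l = ennreal (real (Suc k)) * ennreal l"
      by (simp only: ennreal_of_nat_eq_real_of_nat)
    also have "\<dots> = ennreal (real (Suc k) * l)" using l by (simp add: ennreal_mult)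
    also have "real (Suc k) * l = real k" unfolding l_def by simp
    finally show ?thesis by (simp add: ennreal_of_nat_eq_real_of_nat)
  qed
  have c2: "of_nat (Suc k) * ennreal (1 - l) = (1 :: ennreal)"
  proof -
    have "1 - l = 1 / real (Suc k)" unfolding l_def by (simp add: field_simps)
    have "of_nat (Suc k) * ennreal (1-l) = ennreal (real (Suc k)) * ennreal (1-l)"
      by (simp only: ennreal_of_nat_eq_real_of_nat)
    also have "\<dots> = ennreal (real (Suc k) * (1-l))" using l by (simp add: ennreal_mult)
    also have "real (Suc k) * (1-l) = 1" unfolding \<open>1 - l = 1 / real (Suc k)\<close> by simp
    finally show ?thesis by simp
  qed
  have "(\<Sum>i<Suc k. emeasure lborel (A i)) = (\<Sum>i<k. emeasure lborel (A i)) + emeasure lborel (A k)"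
    by simp
  also have "\<dots> \<le> of_nat k * emeasure lborel ?M + emeasure lborel (A k)"
    using IH(2) by (rule add_right_mono)
  also have "\<dots> = of_nat (Suc k) * (ennreal l * emeasure lborel ?M + ennreal (1-l) * emeasure lborel (A k))"
    by (simp only: distrib_left mult.assoc[symmetric] c1 c2 mult.left_neutral)
  also have "\<dots> \<le> of_nat (Suc k) * emeasure lborel {l*m + (1-l)*a | m a. m \<in> ?M \<and> a \<in> A k}"
    using bm by (rule mult_left_mono) simp
  finally show ?case using eq cpt by simp
qed

lemma emeasure_Ioi_inf: "emeasure lborel {(a::real)<..} = \<infinity>"
proof (rule ccontr)
  assume "emeasure lborel {a<..} \<noteq> \<infinity>"
  then obtain r where r: "emeasure lborel {a<..} = ennreal r" "0 \<le> r"
    by (cases "emeasure lborel {a<..}") auto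
  have "ennreal (r+1) = emeasure lborel {a<..<a+(r+1)}" using r by simp
  also have "\<dots> \<le> emeasure lborel {a<..}" by (rule emeasure_mono) auto
  finally show False using r by (simp add: ennreal_le_iff)
qed

lemma layer_cake:
  fixes g :: "real \<Rightarrow> ennreal"
  assumes gm[measurable]: "g \<in> borel_measurable borel"
  shows "(\<integral>\<^sup>+x. g x \<partial>lborel) = (\<integral>\<^sup>+v. indicator {0<..} v * emeasure lborel {x. ennreal v < g x} \<partial>lborel)"
proof -
  define G where "G = (\<lambda>x v::real. if 0 < v \<and> ennreal v < g x then 1 else (0::ennreal))"
  have Gm: "case_prod G \<in> borel_measurable (lborel \<Otimes>\<^sub>M lborel)"
    unfolding G_def by measurable
  have inner: "(\<integral>\<^sup>+v. G x v \<partial>lborel) = g x" for x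
  proof (cases "g x = \<infinity>")
    case True
    then have "G x = indicator {0<..}" by (auto simp: G_def fun_eq_iff split: split_indicator)
    then show ?thesis using True by (simp add: emeasure_Ioi_inf)
  next
    case False
    then obtain r where r: "g x = ennreal r" "0 \<le> r" by (cases "g x") auto
    then have "G x = indicator {0<..<r}" by (auto simp: G_def fun_eq_iff ennreal_less_iff split: split_indicator)
    then show ?thesis using r by simp
  qed
  have outer: "(\<integral>\<^sup>+x. G x v \<partial>lborel) = indicator {0<..} v * emeasure lborel {x. ennreal v < g x}" for v
  proof -
    have "(\<lambda>x. G x v) = (\<lambda>x. indicator {0<..} v * indicator {x. ennreal v < g x} x)"
      by (auto simp: G_def fun_eq_iff split: split_indicator)
    moreover have "{x. ennreal v < g x} \<in> sets lborel" by measurable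
    ultimately show ?thesis by (simp add: nn_integral_cmult)
  qed
  have "(\<integral>\<^sup>+x. g x \<partial>lborel) = (\<integral>\<^sup>+x. (\<integral>\<^sup>+v. G x v \<partial>lborel) \<partial>lborel)"
    by (simp add: inner)
  also have "\<dots> = (\<integral>\<^sup>+v. (\<integral>\<^sup>+x. G x v \<partial>lborel) \<partial>lborel)"
    by (rule lborel_pair.Fubini'[symmetric]) (rule Gm)
  also have "\<dots> = (\<integral>\<^sup>+v. indicator {0<..} v * emeasure lborel {x. ennreal v < g x} \<partial>lborel)"
    by (simp add: outer)
  finally show ?thesis .
qed

lemma level_measurable:
  fixes F :: "real \<Rightarrow> real" and M :: real
  assumes [measurable]: "F \<in> borel_measurable borel"
  shows "(\<lambda>u. emeasure lborel {t. M*u < F t}) \<in> borel_measurable borel"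
proof -
  have "{(u,t). M*u < F t} = {p \<in> space (borel \<Otimes>\<^sub>M lborel). M * fst p < F (snd p)}"
    by (auto simp: space_pair_measure)
  also have "\<dots> \<in> sets (borel \<Otimes>\<^sub>M lborel)" by measurable
  finally have Q: "{(u,t). M*u < F t} \<in> sets (borel \<Otimes>\<^sub>M lborel)" .
  have "(\<lambda>u. emeasure lborel (Pair u -` {(u,t). M*u < F t})) \<in> borel_measurable borel"
    by (rule sigma_finite_measure.measurable_emeasure_Pair[OF _ Q]) (rule lborel.sigma_finite_measure_axioms)
  then show ?thesis by (simp add: vimage_def)
qed

lemma level_integral:
  fixes F :: "real \<Rightarrow> real" and M :: real
  assumes Fm[measurable]: "F \<in> borel_measurable borel" and M: "M > 0"
    and Fb: "\<And>t. F t \<le> M" and Fnn: "\<And>t. 0 \<le> F t"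
  shows "(\<integral>\<^sup>+t. ennreal (F t) \<partial>lborel) =
         ennreal M * (\<integral>\<^sup>+u. indicator {0<..<1} u * emeasure lborel {t. M*u < F t} \<partial>lborel)"
proof -
  define G where "G = (\<lambda>v::real. indicator {0<..} v * emeasure lborel {x. ennreal v < ennreal (F x)})"
  have Gm: "G \<in> borel_measurable borel"
  proof -
    have "G = (\<lambda>v. indicator {0<..} v * emeasure lborel {x. 1 * v < F x})"
      by (auto simp: G_def fun_eq_iff ennreal_less_iff split: split_indicator)
    then show ?thesis using level_measurable[OF Fm, of 1] by simp
  qed
  have "(\<integral>\<^sup>+t. ennreal (F t) \<partial>lborel) = (\<integral>\<^sup>+v. G v \<partial>lborel)"
    unfolding G_def by (rule layer_cake) measurable
  also have "\<dots> = ennreal \<bar>M\<bar> * (\<integral>\<^sup>+u. G (0 + M * u) \<partial>lborel)"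
    by (rule nn_integral_real_affine) (use Gm M in auto)
  also have "(\<lambda>u. G (0 + M * u)) = (\<lambda>u. indicator {0<..<1} u * emeasure lborel {t. M*u < F t})"
  proof
    fix u
    show "G (0 + M * u) = indicator {0<..<1} u * emeasure lborel {t. M*u < F t}"
    proof (cases "0 < u")
      case True
      then have e: "{x. ennreal (M*u) < ennreal (F x)} = {t. M*u < F t}"
        using M by (auto simp: ennreal_less_iff)
      show ?thesis
      proof (cases "u < 1")
        case True
        then show ?thesis using \<open>0<u\<close> M e by (simp add: G_def)
      next
        case False
        then have "{t. M*u < F t} = {}" using Fb M
          by (auto simp: not_less) (smt (verit, best) mult_le_cancel_left1)
        then show ?thesis using \<open>0<u\<close> M e by (simp add: G_def)
      qed
    next
      case False
      then show ?thesis using M by (simp add: G_def zero_less_mult_iff)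
    qed
  qed
  finally show ?thesis using M by simp
qed

lemma inner_closed_borel:
  fixes S :: "real set" assumes S: "S \<in> sets borel" and e: "e > 0"
  obtains T where "closed T" "T \<subseteq> S" "emeasure lborel (S - T) < ennreal e"
proof -
  have Sl: "S \<in> sets lebesgue" using S by (metis sets_completionI_sets sets_lborel)
  obtain T0 where T0: "closed T0" "T0 \<subseteq> S" "S - T0 \<in> lmeasurable" "emeasure lebesgue (S - T0) < ennreal e"
    by (rule sets_lebesgue_inner_closed[OF Sl e])
  have T0m: "T0 \<in> sets borel" using T0(1) by (simp add: borel_closed)
  have LTm: "S - T0 \<in> sets lborel" using S T0m by auto
  have "S - T0 \<in> sets (completion lborel)" by (rule sets_completionI_sets[OF LTm])
  from emeasure_completion[OF this]
  have eqm: "emeasure lebesgue (S - T0) = emeasure lborel (S - T0)" unfolding main_part[OF LTm] .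
  have "emeasure lborel (S - T0) < ennreal e"
    using T0(4) unfolding eqm .
  then show ?thesis using T0 that by blast
qed

lemma claimA:
  fixes F :: "nat \<Rightarrow> real \<Rightarrow> real" and H :: "real \<Rightarrow> ennreal" and M :: "nat \<Rightarrow> real" and c u N :: real
  assumes k: "k \<ge> 1"
    and Fm[measurable]: "\<And>i. i<k \<Longrightarrow> F i \<in> borel_measurable borel"
    and Hm[measurable]: "H \<in> borel_measurable borel"
    and Fs: "\<And>i t. i<k \<Longrightarrow> N < \<bar>t\<bar> \<Longrightarrow> F i t = 0"
    and M: "\<And>i. i<k \<Longrightarrow> M i > 0"
    and ne: "\<And>i. i<k \<Longrightarrow> \<exists>t. M i * u < F i t"
    and u: "0 < u"
    and c: "c > 0" "c^k = (\<Prod>i<k. M i)"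
    and cond: "\<And>s. (\<Prod>i<k. ennreal (F i (s i))) \<le> H ((\<Sum>i<k. s i)/real k) ^ k"
  shows "(\<Sum>i<k. emeasure lborel {t. M i * u < F i t}) \<le> of_nat k * emeasure lborel {t. ennreal (c*u) < H t}"
proof -
  define L where "L i = {t. M i * u < F i t}" for i
  define Hs where "Hs = {t. ennreal (c*u) < H t}"
  have Lm: "L i \<in> sets borel" if "i < k" for i unfolding L_def using that by measurable
  have Lb: "L i \<subseteq> {-N..N}" if "i < k" for i
  proof
    fix t assume "t \<in> L i"
    then have "M i * u < F i t" by (simp add: L_def)
    moreover have "0 < M i * u" using M[OF that] u by simp
    ultimately have "F i t \<noteq> 0" by simp
    then have "\<not> N < \<bar>t\<bar>" using Fs[OF that, of t] by auto
    then show "t \<in> {-N..N}" by auto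
  qed
  have Hsm: "Hs \<in> sets borel" unfolding Hs_def by measurable
  have MSsub: "{(\<Sum>i<k. s i)/real k | s. \<forall>i<k. s i \<in> A i} \<subseteq> Hs" if A: "\<And>i. i<k \<Longrightarrow> A i \<subseteq> L i" for A
  proof
    fix x assume "x \<in> {(\<Sum>i<k. s i)/real k | s. \<forall>i<k. s i \<in> A i}"
    then obtain s where s: "x = (\<Sum>i<k. s i)/real k" "\<forall>i<k. s i \<in> A i" by blast
    then have sL: "M i * u < F i (s i)" if "i<k" for i using A that by (auto simp: L_def)
    have Fpos: "0 < F i (s i)" if "i<k" for i
      using sL[OF that] M[OF that] u by (meson less_trans mult_pos_pos)
    have "(\<Prod>i<k. M i * u) < (\<Prod>i<k. F i (s i))"
    proof (rule prod_mono_strict[of 0])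
      show "0 \<in> {..<k}" using k by simp
      show "M 0 * u < F 0 (s 0)" using sL k by simp
    qed (use sL M u Fpos in \<open>auto intro: less_imp_le\<close>)
    moreover have "(\<Prod>i<k. M i * u) = (c*u)^k"
      by (simp add: prod.distrib c(2) power_mult_distrib)
    ultimately have lt: "(c*u)^k < (\<Prod>i<k. F i (s i))" by simp
    have Fnn: "0 \<le> F i (s i)" if "i<k" for i using Fpos[OF that] by simp
    have "ennreal ((c*u)^k) < ennreal (\<Prod>i<k. F i (s i))"
      using lt c u by (subst ennreal_less_iff) auto
    also have "\<dots> = (\<Prod>i<k. ennreal (F i (s i)))" by (rule prod_ennreal[symmetric]) (use Fnn in auto)
    also have "\<dots> \<le> H x ^ k" using cond[of s] s by simp
    finally have lt2: "ennreal ((c*u)^k) < H x ^ k" .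
    show "x \<in> Hs"
    proof (rule ccontr)
      assume "x \<notin> Hs"
      then have "H x \<le> ennreal (c*u)" by (simp add: Hs_def not_less)
      then have "H x ^ k \<le> ennreal (c*u) ^ k" by (rule power_mono) simp
      also have "\<dots> = ennreal ((c*u)^k)" using c u by (simp add: ennreal_power)
      finally show False using lt2 by simp
    qed
  qed
  show ?thesis
  proof (rule ennreal_le_epsilon)
    fix e :: real assume e: "0 < e"
    define e' where "e' = e / real k"
    have e': "0 < e'" using e k by (simp add: e'_def)
    have "\<forall>i\<in>{..<k}. \<exists>T. compact T \<and> T \<noteq> {} \<and> T \<subseteq> L i \<and> emeasure lborel (L i) \<le> emeasure lborel T + ennreal e'"
    proof
      fix i assume "i \<in> {..<k}"
      then have i: "i < k" by simp
      obtain T0 where T0: "closed T0" "T0 \<subseteq> L i" and eLT: "emeasure lborel (L i - T0) < ennreal e'"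
        by (rule inner_closed_borel[OF Lm[OF i] e'])
      have T0m: "T0 \<in> sets borel" using T0(1) by (simp add: borel_closed)
      have LTm: "L i - T0 \<in> sets lborel" using Lm[OF i] T0m by auto
      obtain p where p: "M i * u < F i p" using ne[OF i] by blast
      define T where "T = insert p T0"
      have TL: "T \<subseteq> L i" unfolding T_def using T0 p by (auto simp: L_def)
      have "bounded T" using TL Lb[OF i] by (meson bounded_closed_interval bounded_subset order_trans)
      moreover have "closed T" unfolding T_def using T0(1) by simp
      ultimately have cT: "compact T" by (simp add: compact_eq_bounded_closed)
      have Tm: "T \<in> sets borel" using cT by (simp add: borel_compact)
      have "emeasure lborel (L i) \<le> emeasure lborel (T0 \<union> (L i - T0))"
        by (rule emeasure_mono) (use LTm T0m Lm[OF i] in auto)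
      also have "\<dots> \<le> emeasure lborel T0 + emeasure lborel (L i - T0)"
        by (rule emeasure_subadditive) (use LTm T0m in auto)
      also have "\<dots> \<le> emeasure lborel T + ennreal e'"
      proof (rule add_mono)
        show "emeasure lborel T0 \<le> emeasure lborel T"
          by (rule emeasure_mono) (use Tm in \<open>auto simp: T_def\<close>)
      qed (use eLT in simp)
      finally show "\<exists>T. compact T \<and> T \<noteq> {} \<and> T \<subseteq> L i \<and> emeasure lborel (L i) \<le> emeasure lborel T + ennreal e'"
        using cT TL by (intro exI[of _ T]) (auto simp: T_def)
    qed
    then obtain T where T: "\<And>i. i<k \<Longrightarrow> compact (T i) \<and> T i \<noteq> {} \<and> T i \<subseteq> L i \<and> emeasure lborel (L i) \<le> emeasure lborel (T i) + ennreal e'"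
      by (metis bchoice lessThan_iff)
    let ?MS = "{(\<Sum>i<k. s i)/real k | s. \<forall>i<k. s i \<in> T i}"
    have bm: "compact ?MS \<and> (\<Sum>i<k. emeasure lborel (T i)) \<le> of_nat k * emeasure lborel ?MS"
      by (rule BMk) (use k T in auto)
    have "?MS \<subseteq> Hs" by (rule MSsub) (use T in blast)
    then have MSH: "emeasure lborel ?MS \<le> emeasure lborel Hs"
      by (intro emeasure_mono) (use Hsm in auto)
    have "(\<Sum>i<k. emeasure lborel (L i)) \<le> (\<Sum>i<k. emeasure lborel (T i) + ennreal e')"
      by (rule sum_mono) (use T in auto)
    also have "\<dots> = (\<Sum>i<k. emeasure lborel (T i)) + of_nat k * ennreal e'"
      by (simp add: sum.distrib)
    also have "of_nat k * ennreal e' = ennreal e"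
    proof -
      have "of_nat k * ennreal e' = ennreal (real k * e')"
        using e' by (simp add: ennreal_of_nat_eq_real_of_nat ennreal_mult)
      then show ?thesis using k by (simp add: e'_def)
    qed
    also have "(\<Sum>i<k. emeasure lborel (T i)) \<le> of_nat k * emeasure lborel Hs"
      using bm MSH by (meson mult_left_mono order_trans zero_le)
    finally show "(\<Sum>i<k. emeasure lborel {t. M i * u < F i t}) \<le> of_nat k * emeasure lborel {t. ennreal (c*u) < H t} + ennreal e"
      unfolding L_def Hs_def by (simp add: add_right_mono)
  qed
qed

lemma level_measurable_enn:
  fixes H :: "real \<Rightarrow> ennreal"
  assumes [measurable]: "H \<in> borel_measurable borel"
  shows "(\<lambda>v. emeasure lborel {x. ennreal v < H x}) \<in> borel_measurable borel"
proof -
  have "{(v,x). ennreal v < H x} = {p \<in> space (borel \<Otimes>\<^sub>M lborel). ennreal (fst p) < H (snd p)}"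
    by (auto simp: space_pair_measure)
  also have "\<dots> \<in> sets (borel \<Otimes>\<^sub>M lborel)" by measurable
  finally have Q: "{(v,x). ennreal v < H x} \<in> sets (borel \<Otimes>\<^sub>M lborel)" .
  have "(\<lambda>v. emeasure lborel (Pair v -` {(v,x). ennreal v < H x})) \<in> borel_measurable borel"
    by (rule sigma_finite_measure.measurable_emeasure_Pair[OF _ Q]) (rule lborel.sigma_finite_measure_axioms)
  then show ?thesis by (simp add: vimage_def)
qed

lemma PL_core:
  fixes F :: "nat \<Rightarrow> real \<Rightarrow> real" and H :: "real \<Rightarrow> ennreal" and N B :: real
  assumes k: "k \<ge> 1"
    and Fm[measurable]: "\<And>i. i<k \<Longrightarrow> F i \<in> borel_measurable borel"
    and Hm[measurable]: "H \<in> borel_measurable borel"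
    and Fnn: "\<And>i t. i<k \<Longrightarrow> 0 \<le> F i t"
    and Fb: "\<And>i t. i<k \<Longrightarrow> F i t \<le> B"
    and Fs: "\<And>i t. i<k \<Longrightarrow> N < \<bar>t\<bar> \<Longrightarrow> F i t = 0"
    and cond: "\<And>s. (\<Prod>i<k. ennreal (F i (s i))) \<le> H ((\<Sum>i<k. s i)/real k) ^ k"
  shows "(\<Prod>i<k. \<integral>\<^sup>+t. ennreal (F i t) \<partial>lborel) \<le> (\<integral>\<^sup>+t. H t \<partial>lborel) ^ k"
proof (cases "\<exists>i<k. \<forall>t. F i t = 0")
  case True
  then obtain i where i: "i<k" "\<forall>t. F i t = 0" by blast
  then have I0: "(\<integral>\<^sup>+t. ennreal (F i t) \<partial>lborel) = 0" by simp
  have "(\<Prod>i<k. \<integral>\<^sup>+t. ennreal (F i t) \<partial>lborel) = 0"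
    by (rule prod_zero) (simp, use i I0 in blast)
  then show ?thesis by (metis zero_le)
next
  case False
  then have pos: "\<exists>t. 0 < F i t" if "i<k" for i using Fnn that by (metis less_eq_real_def)
  define M where "M i = Sup (range (F i))" for i
  have bdd: "bdd_above (range (F i))" if "i<k" for i using Fb[OF that] by (intro bdd_aboveI[of _ B]) auto
  have FM: "F i t \<le> M i" if "i<k" for i t unfolding M_def using bdd[OF that] by (intro cSup_upper) auto
  have Mpos: "0 < M i" if "i<k" for i using pos[OF that] FM[OF that] by (meson less_le_trans)
  have ne: "\<exists>t. M i * u < F i t" if "i<k" "u<1" "0<u" for i u
  proof -
    have "M i * u < M i" using Mpos[OF \<open>i<k\<close>] that by simp
    then have "M i * u < Sup (range (F i))" by (simp add: M_def)
    then show ?thesis using bdd[OF \<open>i<k\<close>] by (subst (asm) less_cSup_iff) auto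
  qed
  define X where "X i = (\<integral>\<^sup>+u. indicator {0<..<1} u * emeasure lborel {t. M i * u < F i t} \<partial>lborel)" for i
  have IX: "(\<integral>\<^sup>+t. ennreal (F i t) \<partial>lborel) = ennreal (M i) * X i" if "i<k" for i
    unfolding X_def by (rule level_integral) (use that Mpos FM Fnn in auto)
  have Ifin: "(\<integral>\<^sup>+t. ennreal (F i t) \<partial>lborel) < \<infinity>" if "i<k" for i
  proof -
    have "(\<integral>\<^sup>+t. ennreal (F i t) \<partial>lborel) \<le> (\<integral>\<^sup>+t. ennreal B * indicator {-N..N} t \<partial>lborel)"
    proof (rule nn_integral_mono)
      fix t show "ennreal (F i t) \<le> ennreal B * indicator {-N..N} t"
      proof (cases "N < \<bar>t\<bar>")
        case True then show ?thesis using Fs[OF that] by simp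
      next
        case False then show ?thesis using Fb[OF that, of t] by (auto simp: ennreal_leI split: split_indicator)
      qed
    qed
    also have "\<dots> = ennreal B * emeasure lborel {-N..N}"
      by (simp add: nn_integral_cmult_indicator)
    also have "\<dots> < \<infinity>"
      using emeasure_bounded_finite[of "{-N..N}"] by (simp add: ennreal_mult_less_top)
    finally show ?thesis .
  qed
  have "\<exists>x. 0 \<le> x \<and> X i = ennreal x" if "i<k" for i
  proof -
    have "X i \<noteq> \<infinity>"
    proof
      assume "X i = \<infinity>"
      then have "(\<integral>\<^sup>+t. ennreal (F i t) \<partial>lborel) = \<infinity>" using IX[OF that] Mpos[OF that] by simp
      then show False using Ifin[OF that] by simp
    qed
    then show ?thesis by (cases "X i") auto
  qed
  then obtain x where x: "\<And>i. i<k \<Longrightarrow> 0 \<le> x i \<and> X i = ennreal (x i)" by metis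
  define c where "c = (\<Prod>i<k. M i) powr (1 / real k)"
  have prodM: "0 < (\<Prod>i<k. M i)" using Mpos by (intro prod_pos) auto
  have c: "c > 0" "c^k = (\<Prod>i<k. M i)"
  proof -
    show "c > 0" using prodM unfolding c_def by (metis powr_gt_zero less_irrefl)
    have "c^k = c powr real k" using \<open>c>0\<close> by (simp add: powr_realpow)
    also have "\<dots> = (\<Prod>i<k. M i)" using k prodM by (simp add: c_def powr_powr)
    finally show "c^k = (\<Prod>i<k. M i)" .
  qed
  define E where "E v = emeasure lborel {x. ennreal v < H x}" for v
  have Em[measurable]: "E \<in> borel_measurable borel" unfolding E_def by (rule level_measurable_enn) simp
  have "(\<integral>\<^sup>+t. H t \<partial>lborel) = (\<integral>\<^sup>+v. indicator {0<..} v * E v \<partial>lborel)"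
    unfolding E_def by (rule layer_cake) simp
  also have "\<dots> \<ge> (\<integral>\<^sup>+v. indicator {0<..<c} v * E v \<partial>lborel)"
    by (intro nn_integral_mono mult_right_mono) (auto split: split_indicator)
  moreover have "(\<integral>\<^sup>+v. indicator {0<..<c} v * E v \<partial>lborel) = ennreal \<bar>c\<bar> * (\<integral>\<^sup>+u. indicator {0<..<c} (0 + c*u) * E (0 + c*u) \<partial>lborel)"
    by (rule nn_integral_real_affine) (use c in auto)
  moreover have "(\<lambda>u. indicator {0<..<c} (0 + c*u) * E (0 + c*u)) = (\<lambda>u. indicator {0<..<1} u * E (c*u))"
    using c by (auto simp: fun_eq_iff zero_less_mult_iff split: split_indicator)
  ultimately have Hge: "ennreal c * (\<integral>\<^sup>+u. indicator {0<..<1} u * E (c*u) \<partial>lborel) \<le> (\<integral>\<^sup>+t. H t \<partial>lborel)"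
    using c by simp
  have sumX: "(\<Sum>i<k. X i) \<le> of_nat k * (\<integral>\<^sup>+u. indicator {0<..<1} u * E (c*u) \<partial>lborel)"
  proof -
    have "(\<Sum>i<k. X i) = (\<integral>\<^sup>+u. (\<Sum>i<k. indicator {0<..<1} u * emeasure lborel {t. M i * u < F i t}) \<partial>lborel)"
      unfolding X_def
      by (rule nn_integral_sum[symmetric]) (use level_measurable[OF Fm] in auto)
    also have "\<dots> \<le> (\<integral>\<^sup>+u. of_nat k * (indicator {0<..<1} u * E (c*u)) \<partial>lborel)"
    proof (rule nn_integral_mono)
      fix u :: real
      show "(\<Sum>i<k. indicator {0<..<1} u * emeasure lborel {t. M i * u < F i t}) \<le> of_nat k * (indicator {0<..<1} u * E (c*u))"
      proof (cases "0 < u \<and> u < 1")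
        case True
        have "(\<Sum>i<k. emeasure lborel {t. M i * u < F i t}) \<le> of_nat k * emeasure lborel {t. ennreal (c*u) < H t}"
          by (rule claimA[where N=N]) (use k Fs Mpos ne True c cond in auto)
        then show ?thesis using True by (simp add: E_def)
      next
        case False then show ?thesis by simp
      qed
    qed
    also have "\<dots> = of_nat k * (\<integral>\<^sup>+u. indicator {0<..<1} u * E (c*u) \<partial>lborel)"
      by (rule nn_integral_cmult) simp
    finally show ?thesis .
  qed
  show ?thesis
  proof (cases "(\<integral>\<^sup>+t. H t \<partial>lborel) = \<infinity>")
    case True
    then show ?thesis using k by simp
  next
    case False
    then obtain h where h: "(\<integral>\<^sup>+t. H t \<partial>lborel) = ennreal h" "0 \<le> h"
      by (cases "(\<integral>\<^sup>+t. H t \<partial>lborel)") auto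
    have "(\<Sum>i<k. X i) = (\<Sum>i<k. ennreal (x i))" by (rule sum.cong) (use x in auto)
    also have "\<dots> = ennreal (\<Sum>i<k. x i)" by (rule sum_ennreal) (use x in auto)
    finally have sX: "(\<Sum>i<k. X i) = ennreal (\<Sum>i<k. x i)" .
    have xs: "0 \<le> (\<Sum>i<k. x i)" using x by (intro sum_nonneg) auto
    have "ennreal (c * (\<Sum>i<k. x i)) = ennreal c * (\<Sum>i<k. X i)"
      using xs c by (simp add: sX ennreal_mult)
    also have "\<dots> \<le> ennreal c * (of_nat k * (\<integral>\<^sup>+u. indicator {0<..<1} u * E (c*u) \<partial>lborel))"
      by (rule mult_left_mono[OF sumX]) simp
    also have "\<dots> = of_nat k * (ennreal c * (\<integral>\<^sup>+u. indicator {0<..<1} u * E (c*u) \<partial>lborel))"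
      by (simp add: mult.left_commute)
    also have "\<dots> \<le> of_nat k * ennreal h"
      using Hge h by (intro mult_left_mono) auto
    also have "\<dots> = ennreal (real k * h)"
      using h by (simp add: ennreal_of_nat_eq_real_of_nat ennreal_mult)
    finally have ch: "c * (\<Sum>i<k. x i) \<le> real k * h"
      using h by (subst (asm) ennreal_le_iff) auto
    define P where "P = (\<Prod>i<k. x i)"
    have P0: "0 \<le> P" unfolding P_def using x by (intro prod_nonneg) auto
    have am: "P powr (1 / real k) \<le> (\<Sum>i<k. x i) / real k"
    proof -
      have "(\<Sum>i\<in>{..<k}. x i / real (card {..<k})) \<ge> (\<Prod>i\<in>{..<k}. x i) powr (1 / real (card {..<k}))"
        by (rule arith_geom_mean) (use k x in \<open>auto simp: lessThan_empty_iff\<close>)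
      then show ?thesis by (simp add: P_def sum_divide_distrib)
    qed
    have "c * P powr (1 / real k) \<le> h"
    proof -
      have "c * P powr (1 / real k) \<le> c * ((\<Sum>i<k. x i) / real k)"
        using am c by (intro mult_left_mono) auto
      also have "\<dots> \<le> h" using ch k by (simp add: field_simps)
      finally show ?thesis .
    qed
    then have "(c * P powr (1 / real k)) ^ k \<le> h ^ k"
      by (rule power_mono) (use c P0 in simp)
    moreover have "(P powr (1 / real k)) ^ k = P"
    proof (cases "P = 0")
      case True then show ?thesis using k by simp
    next
      case False
      then have "0 < P" using P0 by simp
      then have "(P powr (1 / real k)) ^ k = (P powr (1 / real k)) powr real k"
        by (simp add: powr_realpow)
      also have "\<dots> = P" using k P0 by (simp add: powr_powr)
      finally show ?thesis .
    qed
    ultimately have "(\<Prod>i<k. M i) * P \<le> h ^ k"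
      using c by (simp add: power_mult_distrib)
    then have Pk: "(\<Prod>i<k. M i * x i) \<le> h ^ k" by (simp add: P_def prod.distrib)
    have "(\<Prod>i<k. \<integral>\<^sup>+t. ennreal (F i t) \<partial>lborel) = (\<Prod>i<k. ennreal (M i * x i))"
    proof (intro prod.cong refl)
      fix i assume "i \<in> {..<k}"
      then have i: "i<k" by simp
      show "(\<integral>\<^sup>+t. ennreal (F i t) \<partial>lborel) = ennreal (M i * x i)"
        using IX[OF i] x[OF i] Mpos[OF i] by (simp add: ennreal_mult)
    qed
    also have "\<dots> = ennreal (\<Prod>i<k. M i * x i)"
      using x Mpos by (intro prod_ennreal) (simp add: less_imp_le)
    also have "\<dots> \<le> ennreal (h ^ k)" using Pk by (rule ennreal_leI)
    also have "\<dots> = (\<integral>\<^sup>+t. H t \<partial>lborel) ^ k" using h by (simp add: ennreal_power)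
    finally show ?thesis .
  qed
qed

lemma SUP_mult_SUP_incseq:
  fixes f g :: "nat \<Rightarrow> ennreal" assumes f: "incseq f" and g: "incseq g"
  shows "(SUP n. f n) * (SUP n. g n) = (SUP n. f n * g n)"
proof (rule antisym)
  show "(SUP n. f n) * (SUP n. g n) \<le> (SUP n. f n * g n)"
    unfolding SUP_mult_right_ennreal SUP_mult_left_ennreal
  proof (intro SUP_least)
    fix n m
    have "f n * g m \<le> f (max n m) * g (max n m)"
      using f g by (intro mult_mono) (auto simp: incseq_def)
    also have "\<dots> \<le> (SUP n. f n * g n)" by (rule SUP_upper) simp
    finally show "f n * g m \<le> (SUP n. f n * g n)" .
  qed
  show "(SUP n. f n * g n) \<le> (SUP n. f n) * (SUP n. g n)"
    by (intro SUP_least mult_mono SUP_upper) auto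
qed

lemma prod_SUP_incseq:
  fixes a :: "'i \<Rightarrow> nat \<Rightarrow> ennreal"
  assumes "finite S" "\<And>i. i \<in> S \<Longrightarrow> incseq (a i)"
  shows "(\<Prod>i\<in>S. SUP n. a i n) = (SUP n. \<Prod>i\<in>S. a i n)"
  using assms
proof (induction S rule: finite_induct)
  case empty
  then show ?case by simp
next
  case (insert j S)
  have inc: "incseq (\<lambda>n. \<Prod>i\<in>S. a i n)"
  proof (rule incseq_SucI)
    fix n show "(\<Prod>i\<in>S. a i n) \<le> (\<Prod>i\<in>S. a i (Suc n))"
      using insert.prems by (intro prod_mono_ennreal) (auto simp: incseq_Suc_iff)
  qed
  have "(\<Prod>i\<in>insert j S. SUP n. a i n) = (SUP n. a j n) * (\<Prod>i\<in>S. SUP n. a i n)"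
    using insert.hyps by simp
  also have "\<dots> = (SUP n. a j n) * (SUP n. \<Prod>i\<in>S. a i n)"
    using insert by simp
  also have "\<dots> = (SUP n. a j n * (\<Prod>i\<in>S. a i n))"
    by (rule SUP_mult_SUP_incseq) (use insert.prems inc in auto)
  also have "\<dots> = (SUP n. \<Prod>i\<in>insert j S. a i n)"
    using insert.hyps by simp
  finally show ?case .
qed

lemma PL_gen:
  fixes F :: "nat \<Rightarrow> real \<Rightarrow> ennreal" and H :: "real \<Rightarrow> ennreal"
  assumes k: "k \<ge> 1"
    and Fm[measurable]: "\<And>i. i<k \<Longrightarrow> F i \<in> borel_measurable borel"
    and Hm[measurable]: "H \<in> borel_measurable borel"
    and cond: "\<And>s. (\<Prod>i<k. F i (s i)) \<le> H ((\<Sum>i<k. s i)/real k) ^ k"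
  shows "(\<Prod>i<k. \<integral>\<^sup>+t. F i t \<partial>lborel) \<le> (\<integral>\<^sup>+t. H t \<partial>lborel) ^ k"
proof -
  define G where "G n i t = (if \<bar>t\<bar> \<le> real n then enn2real (min (F i t) (of_nat n)) else 0)" for n i t
  have eG: "ennreal (G n i t) = (if \<bar>t\<bar> \<le> real n then min (F i t) (of_nat n) else 0)" for n i t
  proof -
    have "min (F i t) (of_nat n) < top" by (simp add: min.strict_coboundedI2 of_nat_less_top)
    then show ?thesis by (simp add: G_def)
  qed
  have Gnn: "0 \<le> G n i t" for n i t by (simp add: G_def)
  have Gb: "G n i t \<le> real n" for n i t
  proof -
    have "ennreal (G n i t) \<le> ennreal (real n)" by (simp add: eG ennreal_of_nat_eq_real_of_nat[symmetric])
    then show ?thesis by (simp add: ennreal_le_iff)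
  qed
  have Gs: "G n i t = 0" if "real n < \<bar>t\<bar>" for n i t using that by (simp add: G_def)
  have Gm: "G n i \<in> borel_measurable borel" if "i<k" for n i
    unfolding G_def using Fm[OF that] by measurable
  have GF: "ennreal (G n i t) \<le> F i t" for n i t by (simp add: eG)
  have Ginc: "incseq (\<lambda>n. ennreal (G n i t))" for i t
  proof (rule incseq_SucI)
    fix n show "ennreal (G n i t) \<le> ennreal (G (Suc n) i t)"
    proof -
      have "min (F i t) (of_nat n) \<le> min (F i t) (of_nat (Suc n))" by (rule min.mono) auto
      then show ?thesis by (auto simp: eG)
    qed
  qed
  have GSUP: "(SUP n. ennreal (G n i t)) = F i t" for i t
  proof (rule antisym)
    show "(SUP n. ennreal (G n i t)) \<le> F i t" by (rule SUP_least) (rule GF)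
    show "F i t \<le> (SUP n. ennreal (G n i t))"
    proof (cases "F i t = top")
      case True
      have "(SUP n. ennreal (G n i t)) = top"
      proof (rule ennreal_SUP_eq_top)
        fix n
        obtain m where m: "\<bar>t\<bar> \<le> real m" using real_arch_simple by blast
        have "of_nat n \<le> ennreal (G (max n m) i t)"
          using m True by (auto simp: eG)
        then show "\<exists>j\<in>UNIV. of_nat n \<le> ennreal (G j i t)" by blast
      qed
      then show ?thesis using True by (metis order_refl)
    next
      case False
      then obtain r where r: "F i t = ennreal r" "0 \<le> r" by (cases "F i t") auto
      obtain m where m: "max \<bar>t\<bar> r \<le> real m" using real_arch_simple by blast
      have "ennreal (G m i t) = F i t"
        using m r by (auto simp: eG min_def ennreal_of_nat_eq_real_of_nat)
      then show ?thesis by (metis SUP_upper UNIV_I)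
    qed
  qed
  have core: "(\<Prod>i<k. \<integral>\<^sup>+t. ennreal (G n i t) \<partial>lborel) \<le> (\<integral>\<^sup>+t. H t \<partial>lborel) ^ k" for n
  proof (rule PL_core[where N="real n" and B="real n"])
    fix s :: "nat \<Rightarrow> real"
    have "(\<Prod>i<k. ennreal (G n i (s i))) \<le> (\<Prod>i<k. F i (s i))"
      by (intro prod_mono_ennreal) (auto simp: GF)
    also have "\<dots> \<le> H ((\<Sum>i<k. s i)/real k) ^ k" by (rule cond)
    finally show "(\<Prod>i<k. ennreal (G n i (s i))) \<le> H ((\<Sum>i<k. s i)/real k) ^ k" .
  qed (use k Gm Gnn Gb Gs in auto)
  have intSUP: "(\<integral>\<^sup>+t. F i t \<partial>lborel) = (SUP n. \<integral>\<^sup>+t. ennreal (G n i t) \<partial>lborel)" if "i<k" for i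
  proof -
    have "(\<integral>\<^sup>+t. F i t \<partial>lborel) = (\<integral>\<^sup>+t. (SUP n. ennreal (G n i t)) \<partial>lborel)"
      by (simp add: GSUP)
    also have "\<dots> = (SUP n. \<integral>\<^sup>+t. ennreal (G n i t) \<partial>lborel)"
    proof (rule nn_integral_monotone_convergence_SUP)
      show "incseq (\<lambda>n t. ennreal (G n i t))"
        using Ginc by (auto simp: incseq_def le_fun_def)
    qed (use Gm[OF that] in auto)
    finally show ?thesis .
  qed
  have incI: "incseq (\<lambda>n. \<integral>\<^sup>+t. ennreal (G n i t) \<partial>lborel)" for i
    using Ginc by (auto simp: incseq_def intro!: nn_integral_mono)
  have "(\<Prod>i<k. \<integral>\<^sup>+t. F i t \<partial>lborel) = (\<Prod>i<k. SUP n. \<integral>\<^sup>+t. ennreal (G n i t) \<partial>lborel)"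
    by (rule prod.cong) (auto simp: intSUP)
  also have "\<dots> = (SUP n. \<Prod>i<k. \<integral>\<^sup>+t. ennreal (G n i t) \<partial>lborel)"
    by (rule prod_SUP_incseq) (use incI in auto)
  also have "\<dots> \<le> (\<integral>\<^sup>+t. H t \<partial>lborel) ^ k"
    by (rule SUP_least) (rule core)
  finally show ?thesis .
qed

lemma ESUB:
  fixes g :: "real \<Rightarrow> ennreal"
  assumes gm[measurable]: "g \<in> borel_measurable borel"
  shows "(\<integral>\<^sup>+x. g x * indicator {0<..} x \<partial>lborel) = (\<integral>\<^sup>+s. ennreal (exp s) * g (exp s) \<partial>lborel)"
proof -
  define I where "I m = {exp (- real (Suc m))..exp (real (Suc m))}" for m
  define J where "J m = {- real (Suc m)..real (Suc m)}" for m
  have sub: "(\<integral>\<^sup>+x. g x * indicator (I m) x \<partial>lborel) = (\<integral>\<^sup>+x. g (exp x) * ennreal (exp x) * indicator (J m) x \<partial>lborel)" for m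
    unfolding I_def J_def
    by (rule nn_integral_substitution_aux) (auto intro!: DERIV_exp continuous_intros)
  have SI: "(SUP m. (indicator (I m) x :: ennreal)) = indicator {0<..} x" for x
  proof (cases "0 < x")
    case True
    obtain m0 where "\<bar>ln x\<bar> \<le> real m0" using real_arch_simple by blast
    then have m: "- real (Suc m0) \<le> ln x" "ln x \<le> real (Suc m0)" by linarith+
    then have "exp (- real (Suc m0)) \<le> exp (ln x)" "exp (ln x) \<le> exp (real (Suc m0))"
      by (simp_all only: exp_le_cancel_iff)
    then have xI: "x \<in> I m0" using True by (simp add: I_def)
    have le1: "(SUP m. (indicator (I m) x :: ennreal)) \<le> 1"
      by (rule SUP_least) (simp split: split_indicator)
    have "(1::ennreal) = indicator (I m0) x" using xI by simp
    also have "\<dots> \<le> (SUP m. (indicator (I m) x :: ennreal))" by (rule SUP_upper) simp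
    finally have "(1::ennreal) \<le> (SUP m. (indicator (I m) x :: ennreal))" .
    then have "(SUP m. (indicator (I m) x :: ennreal)) = 1" using le1 by (rule antisym[rotated])
    then show ?thesis using True by simp
  next
    case False
    have "x \<notin> I m" for m
    proof
      assume "x \<in> I m"
      then have "exp (- real (Suc m)) \<le> x" by (simp add: I_def)
      moreover have "0 < exp (- real (Suc m))" by simp
      ultimately show False using False by linarith
    qed
    then show ?thesis using False by simp
  qed
  have SJ: "(SUP m. (indicator (J m) x :: ennreal)) = 1" for x
  proof -
    obtain m0 where "\<bar>x\<bar> \<le> real m0" using real_arch_simple by blast
    then have xJ: "x \<in> J m0" by (simp add: J_def abs_le_iff)
    have le1: "(SUP m. (indicator (J m) x :: ennreal)) \<le> 1"
      by (rule SUP_least) (simp split: split_indicator)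
    have "(1::ennreal) = indicator (J m0) x" using xJ by simp
    also have "\<dots> \<le> (SUP m. (indicator (J m) x :: ennreal))" by (rule SUP_upper) simp
    finally have "(1::ennreal) \<le> (SUP m. (indicator (J m) x :: ennreal))" .
    then show ?thesis using le1 by (rule antisym[rotated])
  qed
  have incI: "incseq (\<lambda>m x. g x * (indicator (I m) x :: ennreal))"
  proof (rule incseq_SucI, rule le_funI)
    fix m x
    have e1: "exp (- real (Suc (Suc m))) \<le> exp (- real (Suc m))" "exp (real (Suc m)) \<le> exp (real (Suc (Suc m)))"
      by simp_all
    have "I m \<subseteq> I (Suc m)" unfolding I_def using e1 by auto
    then show "g x * indicator (I m) x \<le> g x * indicator (I (Suc m)) x"
      by (intro mult_left_mono) (auto split: split_indicator)
  qed
  have incJ: "incseq (\<lambda>m x. g (exp x) * ennreal (exp x) * (indicator (J m) x :: ennreal))"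
  proof (rule incseq_SucI, rule le_funI)
    fix m x
    have "J m \<subseteq> J (Suc m)" by (auto simp: J_def)
    then show "g (exp x) * ennreal (exp x) * indicator (J m) x \<le> g (exp x) * ennreal (exp x) * indicator (J (Suc m)) x"
      by (intro mult_left_mono) (auto split: split_indicator)
  qed
  have "(\<integral>\<^sup>+x. g x * indicator {0<..} x \<partial>lborel) = (\<integral>\<^sup>+x. (SUP m. g x * indicator (I m) x) \<partial>lborel)"
    by (simp add: SUP_mult_left_ennreal[symmetric] SI)
  also have "\<dots> = (SUP m. \<integral>\<^sup>+x. g x * indicator (I m) x \<partial>lborel)"
    by (rule nn_integral_monotone_convergence_SUP[OF incI]) (simp add: I_def)
  also have "\<dots> = (SUP m. \<integral>\<^sup>+x. g (exp x) * ennreal (exp x) * indicator (J m) x \<partial>lborel)"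
    by (simp add: sub)
  also have "\<dots> = (\<integral>\<^sup>+x. (SUP m. g (exp x) * ennreal (exp x) * indicator (J m) x) \<partial>lborel)"
    by (rule nn_integral_monotone_convergence_SUP[OF incJ, symmetric]) (simp add: J_def)
  also have "\<dots> = (\<integral>\<^sup>+s. ennreal (exp s) * g (exp s) \<partial>lborel)"
  proof (rule nn_integral_cong)
    fix x
    have "(SUP m. g (exp x) * ennreal (exp x) * indicator (J m) x) = g (exp x) * ennreal (exp x) * (SUP m. indicator (J m) x)"
      by (rule SUP_mult_left_ennreal[symmetric])
    then show "(SUP m. g (exp x) * ennreal (exp x) * indicator (J m) x) = ennreal (exp x) * g (exp x)"
      by (simp add: SJ mult.commute)
  qed
  finally show ?thesis .
qed

lemma PL_mult:
  fixes f :: "nat \<Rightarrow> real \<Rightarrow> ennreal" and h :: "real \<Rightarrow> ennreal"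
  assumes k: "k \<ge> 1"
    and fm[measurable]: "\<And>i. i<k \<Longrightarrow> f i \<in> borel_measurable borel"
    and hm[measurable]: "h \<in> borel_measurable borel"
    and cond: "\<And>t. (\<And>i. i<k \<Longrightarrow> 0 < t i) \<Longrightarrow> (\<Prod>i<k. f i (t i)) \<le> h (\<Prod>i<k. t i powr (1/real k)) ^ k"
  shows "(\<Prod>i<k. \<integral>\<^sup>+x. f i x * indicator {0<..} x \<partial>lborel) \<le> (\<integral>\<^sup>+x. h x * indicator {0<..} x \<partial>lborel) ^ k"
proof -
  have "(\<Prod>i<k. \<integral>\<^sup>+x. f i x * indicator {0<..} x \<partial>lborel) = (\<Prod>i<k. \<integral>\<^sup>+s. ennreal (exp s) * f i (exp s) \<partial>lborel)"
    by (rule prod.cong) (auto intro!: ESUB)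
  also have "\<dots> \<le> (\<integral>\<^sup>+s. ennreal (exp s) * h (exp s) \<partial>lborel) ^ k"
  proof (rule PL_gen)
    fix s :: "nat \<Rightarrow> real"
    define m where "m = (\<Sum>i<k. s i)/real k"
    have km: "real k * m = (\<Sum>i<k. s i)" using k by (simp add: m_def)
    have e1: "(\<Prod>i<k. exp (s i) powr (1/real k)) = exp m"
    proof -
      have "(\<Prod>i<k. exp (s i) powr (1/real k)) = (\<Prod>i<k. exp (s i / real k))"
        by (rule prod.cong) (auto simp: powr_def)
      also have "\<dots> = exp (\<Sum>i<k. s i / real k)" by (simp add: exp_sum)
      also have "\<dots> = exp m" by (simp add: m_def sum_divide_distrib)
      finally show ?thesis .
    qed
    have "(\<Prod>i<k. ennreal (exp (s i)) * f i (exp (s i))) = (\<Prod>i<k. ennreal (exp (s i))) * (\<Prod>i<k. f i (exp (s i)))"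
      by (simp add: prod.distrib)
    also have "(\<Prod>i<k. ennreal (exp (s i))) = ennreal (exp (\<Sum>i<k. s i))"
      by (simp add: prod_ennreal exp_sum)
    also have "(\<Prod>i<k. f i (exp (s i))) \<le> h (exp m) ^ k"
      using cond[of "\<lambda>i. exp (s i)"] e1 by simp
    also have "ennreal (exp (\<Sum>i<k. s i)) * h (exp m) ^ k = (ennreal (exp m) * h (exp m)) ^ k"
    proof -
      have "ennreal (exp m) ^ k = ennreal (exp m ^ k)" by (simp add: ennreal_power)
      also have "exp m ^ k = exp (real k * m)" by (simp add: exp_of_nat_mult)
      finally show ?thesis by (simp add: power_mult_distrib km)
    qed
    finally show "(\<Prod>i<k. ennreal (exp (s i)) * f i (exp (s i))) \<le> (ennreal (exp m) * h (exp m)) ^ k"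
      by (simp add: mult_left_mono)
  qed (use k in auto)
  also have "(\<integral>\<^sup>+s. ennreal (exp s) * h (exp s) \<partial>lborel) = (\<integral>\<^sup>+x. h x * indicator {0<..} x \<partial>lborel)"
    by (rule ESUB[symmetric]) simp
  finally show ?thesis .
qed

lemma split_pos_neg:
  fixes \<phi> :: "real \<Rightarrow> ennreal"
  assumes [measurable]: "\<phi> \<in> borel_measurable borel"
  shows "(\<integral>\<^sup>+x. \<phi> x \<partial>lborel) = (\<integral>\<^sup>+x. \<phi> x * indicator {0<..} x \<partial>lborel) + (\<integral>\<^sup>+x. \<phi> (-x) * indicator {0<..} x \<partial>lborel)"
proof -
  have "(\<integral>\<^sup>+x. \<phi> x \<partial>lborel) = (\<integral>\<^sup>+x. \<phi> x * indicator {0<..} x + \<phi> x * indicator {..<0} x \<partial>lborel)"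
  proof (rule nn_integral_cong_AE)
    show "AE x in lborel. \<phi> x = \<phi> x * indicator {0<..} x + \<phi> x * indicator {..<0} x"
      using AE_lborel_singleton[of 0] by eventually_elim (auto split: split_indicator)
  qed
  also have "\<dots> = (\<integral>\<^sup>+x. \<phi> x * indicator {0<..} x \<partial>lborel) + (\<integral>\<^sup>+x. \<phi> x * indicator {..<0} x \<partial>lborel)"
    by (rule nn_integral_add) auto
  also have "(\<integral>\<^sup>+x. \<phi> x * indicator {..<0} x \<partial>lborel) = ennreal \<bar>-1\<bar> * (\<integral>\<^sup>+x. \<phi> (0 + (-1) * x) * indicator {..<0} (0 + (-1) * x) \<partial>lborel)"
    by (rule nn_integral_real_affine) auto
  also have "\<dots> = (\<integral>\<^sup>+x. \<phi> (-x) * indicator {0<..} x \<partial>lborel)"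
    by (auto intro!: nn_integral_cong split: split_indicator)
  finally show ?thesis .
qed

lemma PL_sym:
  fixes f :: "nat \<Rightarrow> real \<Rightarrow> ennreal" and h :: "real \<Rightarrow> ennreal"
  assumes k: "k \<ge> 1"
    and fm[measurable]: "\<And>i. i<k \<Longrightarrow> f i \<in> borel_measurable borel"
    and hm[measurable]: "h \<in> borel_measurable borel"
    and cond: "\<And>t \<sigma>. \<sigma> = 1 \<or> \<sigma> = -1 \<Longrightarrow> (\<Prod>i<k. f i (t i)) \<le> h (\<sigma> * (\<Prod>i<k. \<bar>t i\<bar> powr (1/real k))) ^ k"
  shows "(\<Prod>i<k. \<integral>\<^sup>+x. f i x \<partial>lborel) \<le> (\<integral>\<^sup>+x. h x \<partial>lborel) ^ k"
proof -
  define g where "g i x = max (f i x) (f i (-x))" for i x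
  have gm[measurable]: "g i \<in> borel_measurable borel" if "i<k" for i
    unfolding g_def using fm[OF that] by measurable
  have gcond: "(\<Prod>i<k. g i (t i)) \<le> h (\<sigma> * (\<Prod>i<k. t i powr (1/real k))) ^ k"
    if \<sigma>: "\<sigma> = 1 \<or> \<sigma> = -1" and t: "\<And>i. i<k \<Longrightarrow> 0 < t i" for t \<sigma>
  proof -
    define t' where "t' i = (if f i (-t i) \<le> f i (t i) then t i else - t i)" for i
    have "(\<Prod>i<k. g i (t i)) = (\<Prod>i<k. f i (t' i))"
      by (rule prod.cong) (auto simp: g_def t'_def max_def)
    also have "\<dots> \<le> h (\<sigma> * (\<Prod>i<k. \<bar>t' i\<bar> powr (1/real k))) ^ k" by (rule cond[OF \<sigma>])
    also have "(\<Prod>i<k. \<bar>t' i\<bar> powr (1/real k)) = (\<Prod>i<k. t i powr (1/real k))"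
      by (intro prod.cong refl) (simp add: t'_def abs_of_pos t)
    finally show ?thesis .
  qed
  define P where "P = (\<Prod>i<k. \<integral>\<^sup>+x. g i x * indicator {0<..} x \<partial>lborel)"
  define A where "A = (\<integral>\<^sup>+x. h x * indicator {0<..} x \<partial>lborel)"
  define B where "B = (\<integral>\<^sup>+x. h (-x) * indicator {0<..} x \<partial>lborel)"
  have PA: "P \<le> A ^ k" unfolding P_def A_def
  proof (rule PL_mult)
    fix t :: "nat \<Rightarrow> real" assume "\<And>i. i<k \<Longrightarrow> 0 < t i"
    then show "(\<Prod>i<k. g i (t i)) \<le> h (\<Prod>i<k. t i powr (1/real k)) ^ k"
      using gcond[of 1 t] by simp
  qed (use k in auto)
  have PB: "P \<le> B ^ k" unfolding P_def B_def
  proof (rule PL_mult)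
    fix t :: "nat \<Rightarrow> real" assume "\<And>i. i<k \<Longrightarrow> 0 < t i"
    then show "(\<Prod>i<k. g i (t i)) \<le> h (- (\<Prod>i<k. t i powr (1/real k))) ^ k"
      using gcond[of "-1" t] by simp
  qed (use k in auto)
  have fi: "(\<integral>\<^sup>+x. f i x \<partial>lborel) \<le> 2 * (\<integral>\<^sup>+x. g i x * indicator {0<..} x \<partial>lborel)" if "i<k" for i
  proof -
    have "(\<integral>\<^sup>+x. f i x \<partial>lborel) = (\<integral>\<^sup>+x. f i x * indicator {0<..} x \<partial>lborel) + (\<integral>\<^sup>+x. f i (-x) * indicator {0<..} x \<partial>lborel)"
      by (rule split_pos_neg) (use that in simp)
    also have "\<dots> \<le> (\<integral>\<^sup>+x. g i x * indicator {0<..} x \<partial>lborel) + (\<integral>\<^sup>+x. g i x * indicator {0<..} x \<partial>lborel)"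
      by (intro add_mono nn_integral_mono mult_right_mono) (auto simp: g_def)
    finally show ?thesis by (simp add: mult_2)
  qed
  have "(\<Prod>i<k. \<integral>\<^sup>+x. f i x \<partial>lborel) \<le> (\<Prod>i<k. 2 * (\<integral>\<^sup>+x. g i x * indicator {0<..} x \<partial>lborel))"
    by (rule prod_mono_ennreal) (use fi in auto)
  also have "\<dots> = 2 ^ k * P" by (simp add: P_def prod.distrib)
  also have "\<dots> \<le> (A + B) ^ k"
  proof -
    define m where "m = min A B"
    have "P \<le> m ^ k" using PA PB by (simp add: m_def min_def)
    then have "2 ^ k * P \<le> 2 ^ k * m ^ k" by (rule mult_left_mono) simp
    also have "\<dots> = (2 * m) ^ k" by (simp add: power_mult_distrib)
    also have "\<dots> \<le> (A + B) ^ k"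
      by (rule power_mono) (auto simp: m_def mult_2 min_def intro: add_mono)
    finally show ?thesis .
  qed
  also have "A + B = (\<integral>\<^sup>+x. h x \<partial>lborel)"
    unfolding A_def B_def by (rule split_pos_neg[symmetric]) simp
  finally show ?thesis .
qed

abbreviation LB :: "'a set \<Rightarrow> ('a \<Rightarrow> real) measure" where
  "LB I \<equiv> Pi\<^sub>M I (\<lambda>_. lborel)"

lemma psf_lborel: "product_sigma_finite (\<lambda>_::'a. lborel::real measure)"
  by (simp add: product_sigma_finite_def lborel.sigma_finite_measure_axioms)

lemma PL_nd:
  fixes I :: "'a set"
  assumes I: "finite I" and k: "k \<ge> 1"
  shows "\<And>(f :: nat \<Rightarrow> ('a \<Rightarrow> real) \<Rightarrow> ennreal) (h :: ('a \<Rightarrow> real) \<Rightarrow> ennreal).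
     (\<And>i. i<k \<Longrightarrow> f i \<in> borel_measurable (LB I)) \<Longrightarrow> h \<in> borel_measurable (LB I) \<Longrightarrow>
     (\<And>x \<epsilon>. (\<And>i. i<k \<Longrightarrow> x i \<in> space (LB I)) \<Longrightarrow> (\<And>j. j\<in>I \<Longrightarrow> \<epsilon> j = 1 \<or> \<epsilon> j = -1) \<Longrightarrow>
        (\<Prod>i<k. f i (x i)) \<le> h (\<lambda>j\<in>I. \<epsilon> j * (\<Prod>i<k. \<bar>x i j\<bar> powr (1/real k))) ^ k) \<Longrightarrow>
     (\<Prod>i<k. \<integral>\<^sup>+y. f i y \<partial>LB I) \<le> (\<integral>\<^sup>+y. h y \<partial>LB I) ^ k"
  using I
proof (induction I rule: finite_induct)
  case empty
  fix f :: "nat \<Rightarrow> ('a \<Rightarrow> real) \<Rightarrow> ennreal" and h :: "('a \<Rightarrow> real) \<Rightarrow> ennreal"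
  assume cond: "\<And>x \<epsilon>. (\<And>i. i<k \<Longrightarrow> x i \<in> space (LB {})) \<Longrightarrow> (\<And>j. j\<in>{} \<Longrightarrow> \<epsilon> j = 1 \<or> \<epsilon> j = -1) \<Longrightarrow>
        (\<Prod>i<k. f i (x i)) \<le> h (\<lambda>j\<in>{}. \<epsilon> j * (\<Prod>i<k. \<bar>x i j\<bar> powr (1/real k))) ^ k"
  have "(\<Prod>i<k. f i (\<lambda>_. undefined)) \<le> h (\<lambda>_. undefined) ^ k"
    using cond[of "\<lambda>_ _. undefined" "\<lambda>_. 1"] by (simp add: PiM_empty restrict_def)
  then show "(\<Prod>i<k. \<integral>\<^sup>+y. f i y \<partial>LB {}) \<le> (\<integral>\<^sup>+y. h y \<partial>LB {}) ^ k"
    by (simp add: PiM_empty nn_integral_count_space_finite)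
next
  case (insert j I)
  fix f :: "nat \<Rightarrow> ('a \<Rightarrow> real) \<Rightarrow> ennreal" and h :: "('a \<Rightarrow> real) \<Rightarrow> ennreal"
  assume fm: "\<And>i. i<k \<Longrightarrow> f i \<in> borel_measurable (LB (insert j I))"
    and hm: "h \<in> borel_measurable (LB (insert j I))"
    and cond: "\<And>x \<epsilon>. (\<And>i. i<k \<Longrightarrow> x i \<in> space (LB (insert j I))) \<Longrightarrow> (\<And>l. l\<in>insert j I \<Longrightarrow> \<epsilon> l = 1 \<or> \<epsilon> l = -1) \<Longrightarrow>
        (\<Prod>i<k. f i (x i)) \<le> h (\<lambda>l\<in>insert j I. \<epsilon> l * (\<Prod>i<k. \<bar>x i l\<bar> powr (1/real k))) ^ k"
  define F where "F i x = (\<integral>\<^sup>+t. f i (x(j:=t)) \<partial>lborel)" for i x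
  define H where "H x = (\<integral>\<^sup>+t. h (x(j:=t)) \<partial>lborel)" for x
  have upd: "(\<lambda>(x, t). x(j := t)) \<in> measurable (LB I \<Otimes>\<^sub>M lborel) (LB (insert j I))"
    using measurable_add_dim[of j I "\<lambda>_. lborel"] by simp
  have Fm: "F i \<in> borel_measurable (LB I)" if "i<k" for i
  proof -
    have "(\<lambda>(x, t). f i (x(j := t))) \<in> borel_measurable (LB I \<Otimes>\<^sub>M lborel)"
      using measurable_comp[OF upd fm[OF that]] by (simp add: comp_def case_prod_unfold)
    then show ?thesis unfolding F_def
      by (rule sigma_finite_measure.borel_measurable_nn_integral[OF lborel.sigma_finite_measure_axioms])
  qed
  have Hm: "H \<in> borel_measurable (LB I)"
  proof -
    have "(\<lambda>(x, t). h (x(j := t))) \<in> borel_measurable (LB I \<Otimes>\<^sub>M lborel)"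
      using measurable_comp[OF upd hm] by (simp add: comp_def case_prod_unfold)
    then show ?thesis unfolding H_def
      by (rule sigma_finite_measure.borel_measurable_nn_integral[OF lborel.sigma_finite_measure_axioms])
  qed
  have ins_f: "(\<integral>\<^sup>+y. f i y \<partial>LB (insert j I)) = (\<integral>\<^sup>+y. F i y \<partial>LB I)" if "i<k" for i
    unfolding F_def
    by (rule product_sigma_finite.product_nn_integral_insert[OF psf_lborel insert.hyps(1,2) fm[OF that]])
  have ins_h: "(\<integral>\<^sup>+y. h y \<partial>LB (insert j I)) = (\<integral>\<^sup>+y. H y \<partial>LB I)"
    unfolding H_def
    by (rule product_sigma_finite.product_nn_integral_insert[OF psf_lborel insert.hyps(1,2) hm])
  have Fcond: "(\<Prod>i<k. F i (y i)) \<le> H (\<lambda>l\<in>I. \<epsilon> l * (\<Prod>i<k. \<bar>y i l\<bar> powr (1/real k))) ^ k"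
    if y: "\<And>i. i<k \<Longrightarrow> y i \<in> space (LB I)" and \<epsilon>: "\<And>l. l\<in>I \<Longrightarrow> \<epsilon> l = 1 \<or> \<epsilon> l = -1" for y \<epsilon>
  proof -
    define z where "z = (\<lambda>l\<in>I. \<epsilon> l * (\<Prod>i<k. \<bar>y i l\<bar> powr (1/real k)))"
    have zs: "z \<in> space (LB I)" unfolding z_def by (simp add: space_PiM)
    have "(\<Prod>i<k. \<integral>\<^sup>+t. f i ((y i)(j:=t)) \<partial>lborel) \<le> (\<integral>\<^sup>+t. h (z(j:=t)) \<partial>lborel) ^ k"
    proof (rule PL_sym[OF k])
      fix i assume "i<k"
      show "(\<lambda>t. f i ((y i)(j:=t))) \<in> borel_measurable borel"
        using measurable_comp[OF measurable_component_update[OF y[OF \<open>i<k\<close>] insert.hyps(2)] fm[OF \<open>i<k\<close>]]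
        by (simp add: comp_def)
    next
      show "(\<lambda>t. h (z(j:=t))) \<in> borel_measurable borel"
        using measurable_comp[OF measurable_component_update[OF zs insert.hyps(2)] hm]
        by (simp add: comp_def)
    next
      fix t :: "nat \<Rightarrow> real" and \<sigma> :: real assume \<sigma>: "\<sigma> = 1 \<or> \<sigma> = -1"
      define x where "x i = (y i)(j := t i)" for i
      define \<epsilon>' where "\<epsilon>' = \<epsilon>(j := \<sigma>)"
      have xs: "x i \<in> space (LB (insert j I))" if "i<k" for i
        using y[OF that] by (auto simp: x_def space_PiM PiE_def extensional_def)
      have \<epsilon>': "\<epsilon>' l = 1 \<or> \<epsilon>' l = -1" if "l \<in> insert j I" for l
        using that \<epsilon> \<sigma> by (auto simp: \<epsilon>'_def)
      have eq: "(\<lambda>l\<in>insert j I. \<epsilon>' l * (\<Prod>i<k. \<bar>x i l\<bar> powr (1/real k))) = z(j := \<sigma> * (\<Prod>i<k. \<bar>t i\<bar> powr (1/real k)))"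
      proof
        fix l show "(\<lambda>l\<in>insert j I. \<epsilon>' l * (\<Prod>i<k. \<bar>x i l\<bar> powr (1/real k))) l = (z(j := \<sigma> * (\<Prod>i<k. \<bar>t i\<bar> powr (1/real k)))) l"
          using insert.hyps(2) by (cases "l = j") (auto simp: z_def x_def \<epsilon>'_def)
      qed
      have "(\<Prod>i<k. f i (x i)) \<le> h (\<lambda>l\<in>insert j I. \<epsilon>' l * (\<Prod>i<k. \<bar>x i l\<bar> powr (1/real k))) ^ k"
        by (rule cond) (use xs \<epsilon>' in auto)
      then have "(\<Prod>i<k. f i (x i)) \<le> h (z(j := \<sigma> * (\<Prod>i<k. \<bar>t i\<bar> powr (1/real k)))) ^ k"
        unfolding eq .
      then show "(\<Prod>i<k. f i ((y i)(j := t i))) \<le> h (z(j := \<sigma> * (\<Prod>i<k. \<bar>t i\<bar> powr (1/real k)))) ^ k"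
        unfolding x_def .
    qed
    then show ?thesis by (simp add: F_def H_def z_def)
  qed
  have "(\<Prod>i<k. \<integral>\<^sup>+y. F i y \<partial>LB I) \<le> (\<integral>\<^sup>+y. H y \<partial>LB I) ^ k"
    by (rule insert.IH[OF Fm Hm Fcond])
  then show "(\<Prod>i<k. \<integral>\<^sup>+y. f i y \<partial>LB (insert j I)) \<le> (\<integral>\<^sup>+y. h y \<partial>LB (insert j I)) ^ k"
    by (simp add: ins_f ins_h)
qed

lemma radial_ge:
  fixes K :: "'a::real_normed_vector set"
  assumes "bounded K" "norm u = 1" "t \<ge> 0" "t *\<^sub>R u \<in> K"
  shows "t \<le> radial_fun K u"
proof -
  obtain B where B: "\<And>x. x \<in> K \<Longrightarrow> norm x \<le> B" using assms(1) by (auto simp: bounded_iff)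
  have "bdd_above {t::real. t \<ge> 0 \<and> t *\<^sub>R u \<in> K}"
  proof (rule bdd_aboveI)
    fix s assume "s \<in> {t::real. t \<ge> 0 \<and> t *\<^sub>R u \<in> K}"
    then have s: "s \<ge> 0" "s *\<^sub>R u \<in> K" by auto
    then have "norm (s *\<^sub>R u) \<le> B" using B by blast
    moreover have "norm (s *\<^sub>R u) = s" using s(1) assms(2) by simp
    ultimately show "s \<le> B" by simp
  qed
  moreover have "t \<in> {t::real. t \<ge> 0 \<and> t *\<^sub>R u \<in> K}" using assms by auto
  ultimately show ?thesis unfolding radial_fun_def by (intro cSup_upper)
qed

lemma KEY:
  fixes K :: "nat \<Rightarrow> (real^'n) set" and v :: "nat \<Rightarrow> real^'n"
  assumes k: "k \<ge> 1" and cpt: "\<And>i. i<k \<Longrightarrow> compact (K i)"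
    and hyp: "\<And>x :: nat \<Rightarrow> real ^ 'n. (\<forall>i<k. x i \<in> sphere 0 1) \<Longrightarrow>
           (let D = (\<Sum>j\<in>UNIV. (\<Prod>i<k. \<bar>x i $ j\<bar> powr (1 / real k)) ^ 2) powr (real k / 2)
            in D \<noteq> 0 \<longrightarrow> (\<Prod>i<k. radial_fun (K i) (x i)) \<le> 1 / D)"
    and v: "\<And>i. i<k \<Longrightarrow> v i \<in> K i"
  shows "(\<Sum>j\<in>UNIV. (\<Prod>i<k. \<bar>v i $ j\<bar> powr (1/real k))^2) \<le> 1"
proof (cases "\<exists>i<k. v i = 0")
  case True
  then obtain i0 where i0: "i0 < k" "v i0 = 0" by blast
  have "(\<Prod>i<k. \<bar>v i $ j\<bar> powr (1/real k)) = 0" for j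
    by (rule prod_zero) (simp, use i0 in force)
  then have "(\<Sum>j\<in>UNIV. (\<Prod>i<k. \<bar>v i $ j\<bar> powr (1/real k))^2) = 0"
    by (intro sum.neutral) simp
  then show ?thesis by simp
next
  case False
  define r where "r i = norm (v i)" for i
  define u where "u i = v i /\<^sub>R r i" for i
  have rpos: "0 < r i" if "i<k" for i using False that by (simp add: r_def)
  have u1: "u i \<in> sphere 0 1" if "i<k" for i using rpos[OF that] by (simp add: u_def r_def)
  have vu: "v i = r i *\<^sub>R u i" if "i<k" for i using rpos[OF that] by (simp add: u_def)
  define Q where "Q x = (\<Sum>j\<in>UNIV. (\<Prod>i<k. \<bar>x i $ j\<bar> powr (1/real k))^2)" for x :: "nat \<Rightarrow> real^'n"
  define R where "R = (\<Prod>i<k. r i powr (1/real k))"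
  have Q0: "0 \<le> Q x" for x unfolding Q_def by (intro sum_nonneg) simp
  have QvR: "Q v = R^2 * Q u"
  proof -
    have "(\<Prod>i<k. \<bar>v i $ j\<bar> powr (1/real k)) = R * (\<Prod>i<k. \<bar>u i $ j\<bar> powr (1/real k))" for j
    proof -
      have "(\<Prod>i<k. \<bar>v i $ j\<bar> powr (1/real k)) = (\<Prod>i<k. r i powr (1/real k) * \<bar>u i $ j\<bar> powr (1/real k))"
      proof (intro prod.cong refl)
        fix i assume "i \<in> {..<k}"
        then have i: "i < k" by simp
        have "\<bar>v i $ j\<bar> = r i * \<bar>u i $ j\<bar>" using vu[OF i] rpos[OF i] by (simp add: abs_mult)
        then show "\<bar>v i $ j\<bar> powr (1/real k) = r i powr (1/real k) * \<bar>u i $ j\<bar> powr (1/real k)"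
          using rpos[OF i] by (simp add: powr_mult)
      qed
      then show ?thesis by (simp add: R_def prod.distrib)
    qed
    then show ?thesis by (simp add: Q_def power_mult_distrib sum_distrib_left)
  qed
  show ?thesis
  proof (cases "Q u = 0")
    case True
    then show ?thesis using QvR by (simp add: Q_def)
  next
    case False
    then have Qu: "0 < Q u" using Q0[of u] by simp
    define D where "D = Q u powr (real k / 2)"
    have Dpos: "0 < D" using Qu by (simp add: D_def)
    have "(\<Prod>i<k. radial_fun (K i) (u i)) \<le> 1 / D"
      using hyp[of u] u1 Dpos by (simp add: Let_def D_def Q_def)
    moreover have "(\<Prod>i<k. r i) \<le> (\<Prod>i<k. radial_fun (K i) (u i))"
    proof (rule prod_mono)
      fix i assume "i \<in> {..<k}"
      then have i: "i < k" by simp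
      have "r i \<le> radial_fun (K i) (u i)"
        by (rule radial_ge) (use cpt[OF i] compact_imp_bounded u1[OF i] rpos[OF i] v[OF i] vu[OF i] in auto)
      then show "0 \<le> r i \<and> r i \<le> radial_fun (K i) (u i)" using rpos[OF i] by simp
    qed
    ultimately have "(\<Prod>i<k. r i) \<le> 1 / D" by simp
    then have pD: "(\<Prod>i<k. r i) * D \<le> 1" using Dpos by (simp add: field_simps)
    have prpos: "0 \<le> (\<Prod>i<k. r i)" using rpos by (intro prod_nonneg) (simp add: less_imp_le)
    have R2: "R^2 = (\<Prod>i<k. r i) powr (2 / real k)"
    proof -
      have "R = (\<Prod>i<k. r i) powr (1/real k)" unfolding R_def
        by (rule prod_powr_distrib[symmetric])
      then have "R^2 = ((\<Prod>i<k. r i) powr (1/real k)) powr 2"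
        using prpos by (simp add: powr_realpow[symmetric] del: powr_realpow)
      also have "\<dots> = (\<Prod>i<k. r i) powr (2 / real k)" by (simp add: powr_powr)
      finally show ?thesis .
    qed
    have Q2: "Q u = D powr (2 / real k)"
      using Qu k by (simp add: D_def powr_powr)
    have "Q v = ((\<Prod>i<k. r i) * D) powr (2 / real k)"
      using QvR R2 Q2 prpos Dpos by (simp add: powr_mult)
    also have "\<dots> \<le> 1 powr (2 / real k)"
      by (rule powr_mono2) (use pD prpos Dpos in auto)
    finally show ?thesis by (simp add: Q_def)
  qed
qed

theorem mainTheorem9:
  fixes k :: nat and K :: "nat \<Rightarrow> (real ^ 'n) set"
  assumes "k \<ge> 2"
    and "\<And>i. i < k \<Longrightarrow> convex_body (K i)"
    and "\<And>i. i < k \<Longrightarrow> unconditional (K i)"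
    and "\<And>i. i < k \<Longrightarrow> interior (K i) \<noteq> {}"
    and "\<And>x :: nat \<Rightarrow> real ^ 'n. (\<forall>i<k. x i \<in> sphere 0 1) \<Longrightarrow>
           (let D = (\<Sum>j\<in>UNIV. (\<Prod>i<k. \<bar>x i $ j\<bar> powr (1 / real k)) ^ 2) powr (real k / 2)
            in D \<noteq> 0 \<longrightarrow> (\<Prod>i<k. radial_fun (K i) (x i)) \<le> 1 / D)"
  shows "(\<Prod>i<k. measure lebesgue (K i)) \<le> (measure lebesgue (cball (0 :: real ^ 'n) 1)) ^ k"
proof -
  have k: "k \<ge> 1" using assms(1) by simp
  have cpt: "compact (K i)" if "i<k" for i using assms(2)[OF that] by (simp add: convex_body_def)
  have Km: "K i \<in> sets borel" if "i<k" for i using cpt[OF that] by (simp add: borel_compact)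
  define \<phi> where "\<phi> g = (\<Sum>b\<in>(Basis :: (real^'n) set). g b *\<^sub>R b)" for g :: "real^'n \<Rightarrow> real"
  have \<phi>m: "\<phi> \<in> measurable (LB Basis) borel" unfolding \<phi>_def by measurable
  have comp: "\<phi> g $ j = g (axis j 1)" for g j
  proof -
    have ax: "axis j (1::real) \<in> (Basis :: (real^'n) set)" by simp
    have "\<phi> g $ j = (\<Sum>b\<in>Basis. g b * (b \<bullet> axis j 1))"
      by (simp add: \<phi>_def cart_eq_inner_axis inner_sum_left)
    also have "\<dots> = (\<Sum>b\<in>Basis. if b = axis j 1 then g b else 0)"
      by (intro sum.cong refl) (use ax in \<open>auto simp: inner_Basis\<close>)
    also have "\<dots> = g (axis j 1)" using ax by simp
    finally show ?thesis .
  qed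
  have emeas: "emeasure lborel S = (\<integral>\<^sup>+g. indicator S (\<phi> g) \<partial>LB Basis)" if S: "S \<in> sets borel" for S :: "(real^'n) set"
  proof -
    have eq: "(lborel :: (real^'n) measure) = distr (LB Basis) borel \<phi>"
      unfolding \<phi>_def by (rule lborel_eq)
    have "emeasure lborel S = (\<integral>\<^sup>+x. indicator S x \<partial>(lborel :: (real^'n) measure))" using S by simp
    also have "\<dots> = (\<integral>\<^sup>+x. indicator S x \<partial>(distr (LB Basis) borel \<phi>))" unfolding eq ..
    also have "\<dots> = (\<integral>\<^sup>+g. indicator S (\<phi> g) \<partial>LB Basis)"
      by (rule nn_integral_distr[OF \<phi>m]) (use S in simp)
    finally show ?thesis .
  qed
  have main: "(\<Prod>i<k. \<integral>\<^sup>+g. indicator (K i) (\<phi> g) \<partial>LB Basis) \<le> (\<integral>\<^sup>+g. indicator (cball 0 1) (\<phi> g) \<partial>LB Basis) ^ k"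
  proof (rule PL_nd[OF finite_Basis k])
    fix i assume "i<k"
    show "(\<lambda>g. indicator (K i) (\<phi> g) :: ennreal) \<in> borel_measurable (LB Basis)"
      using measurable_comp[OF \<phi>m borel_measurable_indicator[OF Km[OF \<open>i<k\<close>]]] by (simp add: comp_def)
  next
    show "(\<lambda>g. indicator (cball 0 1) (\<phi> g) :: ennreal) \<in> borel_measurable (LB Basis)"
      using measurable_comp[OF \<phi>m borel_measurable_indicator[of "cball (0::real^'n) 1"]] by (simp add: comp_def)
  next
    fix x :: "nat \<Rightarrow> real^'n \<Rightarrow> real" and \<epsilon> :: "real^'n \<Rightarrow> real"
    assume \<epsilon>: "\<And>j. j \<in> Basis \<Longrightarrow> \<epsilon> j = 1 \<or> \<epsilon> j = -1"
    show "(\<Prod>i<k. indicator (K i) (\<phi> (x i)) :: ennreal) \<le> indicator (cball 0 1) (\<phi> (\<lambda>b\<in>Basis. \<epsilon> b * (\<Prod>i<k. \<bar>x i b\<bar> powr (1/real k)))) ^ k"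
    proof (cases "\<forall>i<k. \<phi> (x i) \<in> K i")
      case False
      then obtain i0 where i0: "i0 < k" "\<phi> (x i0) \<notin> K i0" by blast
      have z: "(\<Prod>i<k. indicator (K i) (\<phi> (x i)) :: ennreal) = 0"
        by (rule prod_zero) (simp, use i0 in force)
      show ?thesis unfolding z by (rule zero_le)
    next
      case True
      define v where "v i = \<phi> (x i)" for i
      have Qv: "(\<Sum>j\<in>UNIV. (\<Prod>i<k. \<bar>v i $ j\<bar> powr (1/real k))^2) \<le> 1"
        by (rule KEY[OF k cpt assms(5)]) (use True in \<open>auto simp: v_def\<close>)
      define w where "w = \<phi> (\<lambda>b\<in>Basis. \<epsilon> b * (\<Prod>i<k. \<bar>x i b\<bar> powr (1/real k)))"
      have wj: "(w $ j)^2 = (\<Prod>i<k. \<bar>v i $ j\<bar> powr (1/real k))^2" for j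
      proof -
        have ax: "axis j (1::real) \<in> (Basis :: (real^'n) set)" by simp
        have "w $ j = \<epsilon> (axis j 1) * (\<Prod>i<k. \<bar>v i $ j\<bar> powr (1/real k))"
          using ax by (simp add: w_def comp v_def)
        moreover have "(\<epsilon> (axis j 1))^2 = 1" using \<epsilon>[OF ax] by auto
        ultimately show ?thesis by (simp add: power_mult_distrib)
      qed
      have "norm w = sqrt (\<Sum>j\<in>UNIV. (w $ j)^2)" by (simp add: norm_vec_def L2_set_def)
      also have "\<dots> \<le> 1" using Qv by (simp add: wj)
      finally have "w \<in> cball 0 1" by simp
      then show ?thesis using True by (simp add: w_def)
    qed
  qed
  have fin: "emeasure lborel S < \<infinity>" if "compact S" for S :: "(real^'n) set"
    using emeasure_bounded_finite[OF compact_imp_bounded[OF that]] .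
  have "ennreal (\<Prod>i<k. measure lebesgue (K i)) = (\<Prod>i<k. ennreal (measure lebesgue (K i)))"
    by (rule prod_ennreal[symmetric]) simp
  also have "\<dots> = (\<Prod>i<k. emeasure lborel (K i))"
  proof (intro prod.cong refl)
    fix i assume "i \<in> {..<k}"
    then have i: "i < k" by simp
    have "emeasure lborel (K i) \<noteq> top" using fin[OF cpt[OF i]] by auto
    then have "emeasure lborel (K i) = ennreal (measure lborel (K i))" by (rule emeasure_eq_ennreal_measure)
    moreover have "measure lebesgue (K i) = measure lborel (K i)"
      using Km[OF i] by (intro measure_completion) simp
    ultimately show "ennreal (measure lebesgue (K i)) = emeasure lborel (K i)" by simp
  qed
  also have "\<dots> = (\<Prod>i<k. \<integral>\<^sup>+g. indicator (K i) (\<phi> g) \<partial>LB Basis)"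
    by (intro prod.cong refl emeas) (simp add: Km)
  also have "\<dots> \<le> (\<integral>\<^sup>+g. indicator (cball 0 1) (\<phi> g) \<partial>LB Basis) ^ k" by (rule main)
  also have "(\<integral>\<^sup>+g. indicator (cball 0 1) (\<phi> g) \<partial>LB Basis) = emeasure lborel (cball (0::real^'n) 1)"
    by (rule emeas[symmetric]) simp
  also have "\<dots> = ennreal (measure lebesgue (cball (0::real^'n) 1))"
  proof -
    have "emeasure lborel (cball (0::real^'n) 1) \<noteq> top" using fin[of "cball 0 1"] by auto
    then have "emeasure lborel (cball (0::real^'n) 1) = ennreal (measure lborel (cball (0::real^'n) 1))"
      by (rule emeasure_eq_ennreal_measure)
    moreover have "measure lebesgue (cball (0::real^'n) 1) = measure lborel (cball (0::real^'n) 1)"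
      by (intro measure_completion) simp
    ultimately show ?thesis by simp
  qed
  finally have "ennreal (\<Prod>i<k. measure lebesgue (K i)) \<le> ennreal ((measure lebesgue (cball (0::real^'n) 1)) ^ k)"
    by (simp add: ennreal_power)
  then show ?thesis by (subst (asm) ennreal_le_iff) auto
qed

end
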